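(* Let $G$ be a group, $C$ a subgroup of $G$, and $\tau\colon G\to(2\mathbb{Z}+1)\cup\{0\}$ an ordering quasi-morphism with kernel $C$. Then $P=\{(g,n)\in G\times\mathbb{Z}:\tau(g)+2n>0\}$ is a positive cone relative to $C\times\{0\}$ for $G\times\mathbb{Z}$.
   Context: An ordering quasi-morphism is a function $\tau\colon G\to\mathbb{Z}$ such that (i) $C=\{g:\tau(g)=0\}$ is a subgroup of $G$ (called the kernel), (ii) $\tau(g^{-1})=-\tau(g)$ for all $g$, (iii) $\tau(g)+\tau(h)+\tau((gh)^{-1})\le1$ for all $g,h\in G$. For a group $H$ and subgroup $K$, a positive cone relative to $K$ is a subsemigroup $P\subseteq H$ with $H=P\sqcup K\sqcup P^{-1}$ (disjoint union). *)

theory Defs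
  imports "HOL-Algebra.Algebra"
begin

definition ordering_quasi_morphism :: "('a, 'b) monoid_scheme \<Rightarrow> ('a \<Rightarrow> int) \<Rightarrow> bool" where
  "ordering_quasi_morphism G \<tau> \<longleftrightarrow>
     subgroup {g \<in> carrier G. \<tau> g = 0} G
   \<and> (\<forall>g \<in> carrier G. \<tau> (inv\<^bsub>G\<^esub> g) = - \<tau> g)
   \<and> (\<forall>g \<in> carrier G. \<forall>h \<in> carrier G.
        \<tau> g + \<tau> h + \<tau> (inv\<^bsub>G\<^esub> (g \<otimes>\<^bsub>G\<^esub> h)) \<le> 1)"

definition oqm_kernel :: "('a, 'b) monoid_scheme \<Rightarrow> ('a \<Rightarrow> int) \<Rightarrow> 'a set" where
  "oqm_kernel G \<tau> = {g \<in> carrier G. \<tau> g = 0}"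

definition relative_positive_cone :: "('a, 'b) monoid_scheme \<Rightarrow> 'a set \<Rightarrow> 'a set \<Rightarrow> bool" where
  "relative_positive_cone H K P \<longleftrightarrow>
     P \<subseteq> carrier H
   \<and> (\<forall>x \<in> P. \<forall>y \<in> P. x \<otimes>\<^bsub>H\<^esub> y \<in> P)
   \<and> carrier H = P \<union> K \<union> set_inv\<^bsub>H\<^esub> P
   \<and> P \<inter> K = {} \<and> P \<inter> set_inv\<^bsub>H\<^esub> P = {} \<and> K \<inter> set_inv\<^bsub>H\<^esub> P = {}"

end

theory Submission
  imports Defs
begin

theorem proposition5p11:
  fixes G (structure) and C :: "'a set" and \<tau> :: "'a \<Rightarrow> int"
  assumes "group G"
    and "subgroup C G"
    and "ordering_quasi_morphism G \<tau>"
    and "oqm_kernel G \<tau> = C"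
    and "\<forall>g \<in> carrier G. \<tau> g = 0 \<or> odd (\<tau> g)"
  shows "relative_positive_cone (G \<times>\<times> integer_group) (C \<times> {0})
           {(g, n). g \<in> carrier G \<and> \<tau> g + 2 * n > 0}"
proof -
  interpret group G by fact
  let ?H = "G \<times>\<times> integer_group"
  let ?P = "{(g, n::int). g \<in> carrier G \<and> \<tau> g + 2 * n > 0}"
  have inv: "\<And>g. g \<in> carrier G \<Longrightarrow> \<tau> (inv g) = - \<tau> g"
    using assms(3) unfolding ordering_quasi_morphism_def by blast
  have qm: "\<And>g h. g \<in> carrier G \<Longrightarrow> h \<in> carrier G \<Longrightarrow> \<tau> g + \<tau> h - 1 \<le> \<tau> (g \<otimes> h)"
  proof -
    fix g h assume g: "g \<in> carrier G" and h: "h \<in> carrier G"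
    have "\<tau> g + \<tau> h + \<tau> (inv (g \<otimes> h)) \<le> 1"
      using assms(3) g h unfolding ordering_quasi_morphism_def by blast
    moreover have "\<tau> (inv (g \<otimes> h)) = - \<tau> (g \<otimes> h)" using inv g h by simp
    ultimately show "\<tau> g + \<tau> h - 1 \<le> \<tau> (g \<otimes> h)" by linarith
  qed
  have Cdef: "\<And>g. g \<in> C \<longleftrightarrow> g \<in> carrier G \<and> \<tau> g = 0"
    using assms(4) unfolding oqm_kernel_def by blast
  have invH: "\<And>g n. g \<in> carrier G \<Longrightarrow> inv\<^bsub>?H\<^esub> (g, n) = (inv g, - n)"
    using inv_DirProd[OF assms(1) group_integer_group] by simp
  have SI: "set_inv\<^bsub>?H\<^esub> ?P = {(g, n). g \<in> carrier G \<and> \<tau> g + 2 * (n::int) < 0}"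
  proof (rule Set.set_eqI, rule iffI)
    fix x assume "x \<in> set_inv\<^bsub>?H\<^esub> ?P"
    then obtain g n where x: "x = inv\<^bsub>?H\<^esub> (g, n)" and g: "g \<in> carrier G" and p: "\<tau> g + 2 * n > 0"
      unfolding SET_INV_def by auto
    then show "x \<in> {(g, n). g \<in> carrier G \<and> \<tau> g + 2 * (n::int) < 0}"
      using invH inv by auto
  next
    fix x assume "x \<in> {(g, n). g \<in> carrier G \<and> \<tau> g + 2 * (n::int) < 0}"
    then obtain g n where x: "x = (g, n)" and g: "g \<in> carrier G" and p: "\<tau> g + 2 * n < 0"
      by auto
    have "(inv g, - n) \<in> ?P" using g p inv by auto
    moreover have "x = inv\<^bsub>?H\<^esub> (inv g, - n)" using x invH g by simp
    ultimately show "x \<in> set_inv\<^bsub>?H\<^esub> ?P" unfolding SET_INV_def by blast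
  qed
  have zero: "\<And>g n. g \<in> carrier G \<Longrightarrow> \<tau> g + 2 * n = 0 \<Longrightarrow> \<tau> g = 0 \<and> n = 0"
  proof -
    fix g n assume g: "g \<in> carrier G" and e: "\<tau> g + 2 * n = 0"
    have "even (\<tau> g)" using e by (metis add.commute add_cancel_left_left dvd_minus_iff dvd_triv_left eq_neg_iff_add_eq_0)
    then show "\<tau> g = 0 \<and> n = 0" using assms(5) g e by auto
  qed
  show ?thesis
    unfolding relative_positive_cone_def SI
  proof (intro conjI)
    show "?P \<subseteq> carrier ?H" by auto
    show "\<forall>x\<in>?P. \<forall>y\<in>?P. x \<otimes>\<^bsub>?H\<^esub> y \<in> ?P"
    proof (intro ballI)
      fix x y assume "x \<in> ?P" "y \<in> ?P"
      then obtain g n h m where "x = (g, n)" "y = (h, m)" "g \<in> carrier G" "h \<in> carrier G"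
        "\<tau> g + 2 * n > 0" "\<tau> h + 2 * m > 0" by auto
      then show "x \<otimes>\<^bsub>?H\<^esub> y \<in> ?P" using qm[of g h] by auto
    qed
    show "carrier ?H = ?P \<union> C \<times> {0} \<union> {(g, n). g \<in> carrier G \<and> \<tau> g + 2 * (n::int) < 0}"
      using zero Cdef by auto (metis linorder_neqE_linordered_idom)+
  qed (use Cdef in auto)
qed

end
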